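(* Let $G$ be an almost well-covered graph of girth at least $6$. Then no vertex of $G_2$ is adjacent to a vertex of $G_0$.
   Context: All graphs are finite and simple. The girth is the length of a shortest cycle (infinite for acyclic graphs). For a graph $G$, $\alpha(G)$ is the maximum size of an independent set and $i(G)$ the minimum size of an inclusion-maximal independent set; $G$ is almost well-covered if $\alpha(G)-i(G)=1$. Types of vertices: let $U$ be the set of vertices of $G$ whose connected component is a complete graph. In $G-U$, vertices of degree $1$ are leaves and the others are internal vertices. An internal vertex adjacent to exactly $k$ leaves is of type $k$; every vertex of $U$ is of type $0$. $G_i$ denotes the subgraph of $G$ induced by all vertices of type $i$. *)

theory Defs
  imports Main
begin

definition simple_graph :: "'a set \<Rightarrow> ('a \<Rightarrow> 'a \<Rightarrow> bool) \<Rightarrow> bool" where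
  "simple_graph V E \<longleftrightarrow> finite V \<and> (\<forall>x y. E x y \<longrightarrow> x \<in> V \<and> y \<in> V)
     \<and> (\<forall>x y. E x y \<longrightarrow> E y x) \<and> (\<forall>x. \<not> E x x)"

definition is_cycle :: "'a set \<Rightarrow> ('a \<Rightarrow> 'a \<Rightarrow> bool) \<Rightarrow> 'a list \<Rightarrow> bool" where
  "is_cycle V E cs \<longleftrightarrow> length cs \<ge> 3 \<and> distinct cs \<and> set cs \<subseteq> V
     \<and> (\<forall>i < length cs. E (cs ! i) (cs ! ((i + 1) mod length cs)))"

text \<open>Girth at least g (vacuous for acyclic graphs, whose girth is infinite).\<close>
definition girth_at_least :: "'a set \<Rightarrow> ('a \<Rightarrow> 'a \<Rightarrow> bool) \<Rightarrow> nat \<Rightarrow> bool" where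
  "girth_at_least V E g \<longleftrightarrow> (\<forall>cs. is_cycle V E cs \<longrightarrow> length cs \<ge> g)"

definition indep_set :: "'a set \<Rightarrow> ('a \<Rightarrow> 'a \<Rightarrow> bool) \<Rightarrow> 'a set \<Rightarrow> bool" where
  "indep_set V E S \<longleftrightarrow> S \<subseteq> V \<and> (\<forall>x\<in>S. \<forall>y\<in>S. \<not> E x y)"

definition maximal_indep_set :: "'a set \<Rightarrow> ('a \<Rightarrow> 'a \<Rightarrow> bool) \<Rightarrow> 'a set \<Rightarrow> bool" where
  "maximal_indep_set V E S \<longleftrightarrow> indep_set V E S \<and> (\<forall>T. indep_set V E T \<and> S \<subseteq> T \<longrightarrow> T = S)"

definition alpha :: "'a set \<Rightarrow> ('a \<Rightarrow> 'a \<Rightarrow> bool) \<Rightarrow> nat" where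
  "alpha V E = Max (card ` {S. indep_set V E S})"

definition indep_domination_number :: "'a set \<Rightarrow> ('a \<Rightarrow> 'a \<Rightarrow> bool) \<Rightarrow> nat" where
  "indep_domination_number V E = Min (card ` {S. maximal_indep_set V E S})"

definition almost_well_covered :: "'a set \<Rightarrow> ('a \<Rightarrow> 'a \<Rightarrow> bool) \<Rightarrow> bool" where
  "almost_well_covered V E \<longleftrightarrow> int (alpha V E) - int (indep_domination_number V E) = 1"

definition component :: "'a set \<Rightarrow> ('a \<Rightarrow> 'a \<Rightarrow> bool) \<Rightarrow> 'a \<Rightarrow> 'a set" where
  "component V E v = {u \<in> V. E\<^sup>*\<^sup>* v u}"

definition Uset :: "'a set \<Rightarrow> ('a \<Rightarrow> 'a \<Rightarrow> bool) \<Rightarrow> 'a set" where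
  "Uset V E = {v \<in> V. \<forall>x\<in>component V E v. \<forall>y\<in>component V E v. x \<noteq> y \<longrightarrow> E x y}"

definition deg_minus_U :: "'a set \<Rightarrow> ('a \<Rightarrow> 'a \<Rightarrow> bool) \<Rightarrow> 'a \<Rightarrow> nat" where
  "deg_minus_U V E v = card {u \<in> V - Uset V E. E v u}"

definition is_leaf :: "'a set \<Rightarrow> ('a \<Rightarrow> 'a \<Rightarrow> bool) \<Rightarrow> 'a \<Rightarrow> bool" where
  "is_leaf V E v \<longleftrightarrow> v \<in> V - Uset V E \<and> deg_minus_U V E v = 1"

definition is_internal :: "'a set \<Rightarrow> ('a \<Rightarrow> 'a \<Rightarrow> bool) \<Rightarrow> 'a \<Rightarrow> bool" where
  "is_internal V E v \<longleftrightarrow> v \<in> V - Uset V E \<and> deg_minus_U V E v \<noteq> 1"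

definition has_type :: "'a set \<Rightarrow> ('a \<Rightarrow> 'a \<Rightarrow> bool) \<Rightarrow> nat \<Rightarrow> 'a \<Rightarrow> bool" where
  "has_type V E k v \<longleftrightarrow> (v \<in> Uset V E \<and> k = 0)
     \<or> (is_internal V E v \<and> card {u. is_leaf V E u \<and> E v u} = k)"

end

theory Submission
  imports Defs
begin

lemma cyc3:
  assumes "a \<noteq> b" "a \<noteq> c" "b \<noteq> c" "a \<in> V" "b \<in> V" "c \<in> V"
    "E a b" "E b c" "E c a"
  shows "is_cycle V E [a,b,c]"
  unfolding is_cycle_def
proof (intro conjI allI impI)
  fix i assume "i < length [a,b,c]"
  hence "i = 0 \<or> i = 1 \<or> i = 2" by auto
  thus "E ([a,b,c] ! i) ([a,b,c] ! ((i + 1) mod length [a,b,c]))"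
    by (elim disjE) (simp_all add: assms)
qed (use assms in auto)

lemma cyc4:
  assumes "distinct [a,b,c,d]" "set [a,b,c,d] \<subseteq> V"
    "E a b" "E b c" "E c d" "E d a"
  shows "is_cycle V E [a,b,c,d]"
  unfolding is_cycle_def
proof (intro conjI allI impI)
  fix i assume "i < length [a,b,c,d]"
  hence "i = 0 \<or> i = 1 \<or> i = 2 \<or> i = 3" by auto
  thus "E ([a,b,c,d] ! i) ([a,b,c,d] ! ((i + 1) mod length [a,b,c,d]))"
    by (elim disjE) (simp_all add: assms)
qed (use assms in simp_all)

lemma cyc5:
  assumes "distinct [a,b,c,d,e]" "set [a,b,c,d,e] \<subseteq> V"
    "E a b" "E b c" "E c d" "E d e" "E e a"
  shows "is_cycle V E [a,b,c,d,e]"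
  unfolding is_cycle_def
proof (intro conjI allI impI)
  fix i assume "i < length [a,b,c,d,e]"
  hence "i = 0 \<or> i = 1 \<or> i = 2 \<or> i = 3 \<or> i = 4" by auto
  thus "E ([a,b,c,d,e] ! i) ([a,b,c,d,e] ! ((i + 1) mod length [a,b,c,d,e]))"
    by (elim disjE) (simp_all add: assms)
qed (use assms in simp_all)

lemma U_closed:
  assumes sg: "simple_graph V E" and e: "E x y" and xU: "x \<in> Uset V E"
  shows "y \<in> Uset V E"
proof -
  have sym: "\<And>p q. E p q \<Longrightarrow> E q p" and inV: "\<And>p q. E p q \<Longrightarrow> p \<in> V \<and> q \<in> V"
    using sg unfolding simple_graph_def by blast+
  have "\<And>t. E\<^sup>*\<^sup>* y t \<longleftrightarrow> E\<^sup>*\<^sup>* x t"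
  proof
    fix t assume "E\<^sup>*\<^sup>* y t" thus "E\<^sup>*\<^sup>* x t" using e by (meson converse_rtranclp_into_rtranclp)
  next
    fix t assume "E\<^sup>*\<^sup>* x t" thus "E\<^sup>*\<^sup>* y t" using sym[OF e] by (meson converse_rtranclp_into_rtranclp)
  qed
  hence "component V E y = component V E x" unfolding component_def by auto
  thus ?thesis using xU inV[OF e] unfolding Uset_def by auto
qed

lemma ex_maximal:
  assumes fin: "finite V" and I: "indep_set V E I"
  shows "\<exists>M. maximal_indep_set V E M \<and> I \<subseteq> M"
proof -
  let ?F = "{T. indep_set V E T \<and> I \<subseteq> T}"
  have finF: "finite ?F" using fin
    by (rule finite_subset[rotated, OF finite_Pow_iff[THEN iffD2]]) (auto simp: indep_set_def)
  have ne: "?F \<noteq> {}" using I by auto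
  have "Max (card ` ?F) \<in> card ` ?F" using finF ne by (intro Max_in) auto
  then obtain T where T: "T \<in> ?F" "card T = Max (card ` ?F)" by (elim imageE) (rule that, assumption, rule sym)
  have "maximal_indep_set V E T"
    unfolding maximal_indep_set_def
  proof (intro conjI allI impI)
    show "indep_set V E T" using T by auto
    fix T' assume h: "indep_set V E T' \<and> T \<subseteq> T'"
    hence "T' \<in> ?F" using T by auto
    hence "card T' \<le> card T" using T finF by auto
    moreover have "finite T'" using h fin by (meson indep_set_def finite_subset)
    ultimately show "T' = T" using h card_seteq by blast
  qed
  thus ?thesis using T by auto
qed

theorem lemma13:
  fixes V :: "'a set" and E :: "'a \<Rightarrow> 'a \<Rightarrow> bool"
  assumes "simple_graph V E"
    and "almost_well_covered V E"
    and "girth_at_least V E 6"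
    and "has_type V E 2 v"
    and "has_type V E 0 u"
  shows "\<not> E v u"
proof
  assume vu: "E v u"
  note sg = assms(1)
  have sg': "finite V \<and> (\<forall>x y. E x y \<longrightarrow> x \<in> V \<and> y \<in> V)
     \<and> (\<forall>x y. E x y \<longrightarrow> E y x) \<and> (\<forall>x. \<not> E x x)"
    using sg unfolding simple_graph_def .
  have fin: "finite V" using sg' by (rule conjunct1)
  have inV: "\<And>p q. E p q \<Longrightarrow> p \<in> V \<and> q \<in> V" using sg' by blast
  have sym: "\<And>p q. E p q \<Longrightarrow> E q p" using sg' by blast
  have irr: "\<And>p. \<not> E p p" using sg' by blast
  have gir: "\<And>cs. is_cycle V E cs \<Longrightarrow> length cs \<ge> 6"
    using assms(3) unfolding girth_at_least_def by simp
  let ?U = "Uset V E"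
  have vint: "is_internal V E v" and c2: "card {x. is_leaf V E x \<and> E v x} = 2"
    using assms(4) unfolding has_type_def by auto
  have vU: "v \<notin> ?U" using vint unfolding is_internal_def by simp
  have uU: "u \<notin> ?U" using vU U_closed[OF sg sym[OF vu]] by (rule contrapos_nn)
  have uint: "is_internal V E u" and c0: "card {x. is_leaf V E x \<and> E u x} = 0"
    using assms(5) uU unfolding has_type_def by auto
  have "finite {x. is_leaf V E x \<and> E u x}"
    by (rule finite_subset[OF _ fin]) (auto dest: inV)
  hence no_leaf: "\<And>x. E u x \<Longrightarrow> \<not> is_leaf V E x" using c0 by auto
  obtain a b where ab: "a \<noteq> b" "is_leaf V E a" "E v a" "is_leaf V E b" "E v b"
    using c2 unfolding card_2_iff by blast
  have leaf_nb: "x = v" if l: "is_leaf V E l" "E v l" "E l x" for l x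
  proof -
    have lU: "l \<notin> ?U" using l(1) unfolding is_leaf_def by simp
    have xU: "x \<notin> ?U" using lU U_closed[OF sg sym[OF l(3)]] by (rule contrapos_nn)
    have c1: "card {y \<in> V - ?U. E l y} = 1" using l(1) unfolding is_leaf_def deg_minus_U_def by simp
    have "x \<in> {y \<in> V - ?U. E l y}" using xU inV[OF l(3)] l(3) by auto
    moreover have "v \<in> {y \<in> V - ?U. E l y}" using vU inV[OF l(2)] sym[OF l(2)] by auto
    ultimately show ?thesis using c1 by (metis card_1_singletonE singletonD)
  qed
  define W where "W = {w. E u w \<and> w \<noteq> v}"
  have "\<exists>z. E w z \<and> z \<noteq> u" if w: "w \<in> W" for w
  proof -
    have euw: "E u w" using w W_def by auto
    have wU: "w \<notin> ?U" using uU U_closed[OF sg sym[OF euw]] by (rule contrapos_nn)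
    have "\<not> is_leaf V E w" using no_leaf euw by blast
    hence cd: "card {x \<in> V - ?U. E w x} \<noteq> 1"
      using wU inV[OF euw] unfolding is_leaf_def deg_minus_U_def by auto
    have uin: "u \<in> {x \<in> V - ?U. E w x}" using uU inV[OF euw] sym[OF euw] by auto
    show ?thesis
    proof (rule ccontr)
      assume "\<not> ?thesis"
      hence "{x \<in> V - ?U. E w x} = {u}" using uin by auto
      thus False using cd by auto
    qed
  qed
  then obtain z where z: "\<And>w. w \<in> W \<Longrightarrow> E w (z w) \<and> z w \<noteq> u" by metis
  have uv: "u \<noteq> v" using vu irr by blast
  have Wuv: "\<And>w. w \<in> W \<Longrightarrow> E u w \<and> w \<noteq> v \<and> w \<noteq> u" using W_def irr by blast
  have zv: "z w \<noteq> v" if w: "w \<in> W" for w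
  proof
    assume h: "z w = v"
    have "is_cycle V E [u,w,v]"
    proof -
      have "E u w" "w \<noteq> v" "w \<noteq> u" using Wuv[OF w] by auto
      moreover have "E w v" using z[OF w] h by auto
      moreover note uv vu
      ultimately show ?thesis using inV[of u w] inV[of w v] sym[of v u]
        by (intro cyc3) auto
    qed
    thus False using gir by fastforce
  qed
  have nzv: "\<not> E v (z w)" if w: "w \<in> W" for w
  proof
    assume h: "E v (z w)"
    have "is_cycle V E [v,u,w,z w]"
    proof -
      have "E u w" "w \<noteq> v" "w \<noteq> u" using Wuv[OF w] by auto
      moreover have "E w (z w)" "z w \<noteq> u" using z[OF w] by auto
      moreover note uv vu zv[OF w] h
      moreover have "w \<noteq> z w" using irr[of w] \<open>E w (z w)\<close> by metis
      ultimately show ?thesis using inV[of u w] inV[of v u] inV[of w "z w"] sym[of v "z w"] sym[of v u]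
        by (intro cyc4) auto
    qed
    thus False using gir by fastforce
  qed
  have nww: "\<not> E w w'" if "w \<in> W" "w' \<in> W" for w w'
  proof
    assume h: "E w w'"
    have "is_cycle V E [u,w,w']"
    proof -
      have "E u w" "E u w'" using Wuv that by auto
      moreover note h
      moreover have "w \<noteq> w'" using h irr by metis
      moreover have "u \<noteq> w" "u \<noteq> w'" using Wuv that by auto
      ultimately show ?thesis using inV[of u w] inV[of u w'] sym[of u w']
        by (intro cyc3) auto
    qed
    thus False using gir by fastforce
  qed
  have nzz: "\<not> E (z w) (z w')" if w: "w \<in> W" "w' \<in> W" for w w'
  proof
    assume h: "E (z w) (z w')"
    have ne: "w \<noteq> w'" using h irr by auto
    have z1: "z w \<noteq> w'" using nww[OF w(2) w(1)] z[OF w(1)] sym by metis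
    have z2: "z w' \<noteq> w" using nww[OF w(1) w(2)] z[OF w(2)] sym by metis
    have "is_cycle V E [u,w,z w,z w',w']"
    proof -
      have "E u w" "E u w'" "w \<noteq> u" "w' \<noteq> u" using Wuv w by auto
      moreover have "E w (z w)" "z w \<noteq> u" "E w' (z w')" "z w' \<noteq> u" using z w by auto
      moreover have "w \<noteq> z w" "w' \<noteq> z w'" "z w \<noteq> z w'"
        using irr \<open>E w (z w)\<close> \<open>E w' (z w')\<close> h by metis+
      moreover note h ne z1 z2
      ultimately show ?thesis using inV[of u w] inV[of u w'] inV[of w "z w"] inV[of w' "z w'"]
          sym[of w' "z w'"] sym[of u w']
        by (intro cyc5) auto
    qed
    thus False using gir by fastforce
  qed
  define I where "I = insert v (z ` W)"
  have indI: "indep_set V E I"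
    unfolding indep_set_def I_def
  proof (intro conjI ballI)
    show "insert v (z ` W) \<subseteq> V" using inV[OF vu] inV z by blast
  next
    fix x y assume x: "x \<in> insert v (z ` W)" and y: "y \<in> insert v (z ` W)"
    show "\<not> E x y"
    proof (cases "x = v")
      case True
      then show ?thesis using y irr nzv by auto
    next
      case False
      then obtain w where w: "w \<in> W" "x = z w" using x by auto
      show ?thesis
      proof (cases "y = v")
        case True then show ?thesis using w nzv[OF w(1)] sym[of "z w" v] by auto
      next
        case False
        then obtain w' where "w' \<in> W" "y = z w'" using y by auto
        then show ?thesis using w nzz by auto
      qed
    qed
  qed
  obtain M where M: "maximal_indep_set V E M" "I \<subseteq> M" using ex_maximal[OF fin indI] by blast
  have indM: "indep_set V E M" using M(1) unfolding maximal_indep_set_def by simp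
  have vM: "v \<in> M" using M(2) unfolding I_def by simp
  have Mind: "\<And>x y. x \<in> M \<Longrightarrow> y \<in> M \<Longrightarrow> \<not> E x y" using indM unfolding indep_set_def by simp
  have MV: "M \<subseteq> V" using indM unfolding indep_set_def by simp
  have aM: "a \<notin> M" using Mind[OF vM] ab(3) by metis
  have bM: "b \<notin> M" using Mind[OF vM] ab(5) by metis
  have uM: "u \<notin> M" using Mind[OF vM] vu by metis
  have WM: "\<And>w. w \<in> W \<Longrightarrow> w \<notin> M"
  proof -
    fix w assume w: "w \<in> W"
    have "z w \<in> M" using M(2) w unfolding I_def by auto
    thus "w \<notin> M" using Mind z[OF w] by metis
  qed
  define M' where "M' = insert a (insert b (insert u (M - {v})))"
  have la: "\<And>x. E a x \<Longrightarrow> x = v" using leaf_nb ab(2,3) by metis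
  have lb: "\<And>x. E b x \<Longrightarrow> x = v" using leaf_nb ab(4,5) by metis
  have lu: "\<And>x. E u x \<Longrightarrow> x \<notin> M - {v}"
  proof -
    fix x assume "E u x"
    thus "x \<notin> M - {v}" using WM[of x] unfolding W_def by auto
  qed
  have ne: "\<And>x y. E x y \<Longrightarrow> x \<noteq> y" using irr by metis
  have indM': "indep_set V E M'"
    unfolding indep_set_def M'_def
  proof (intro conjI ballI)
    show "insert a (insert b (insert u (M - {v}))) \<subseteq> V"
      using MV inV[OF ab(3)] inV[OF ab(5)] inV[OF vu] by auto
  next
    fix x y assume x: "x \<in> insert a (insert b (insert u (M - {v})))"
      and y: "y \<in> insert a (insert b (insert u (M - {v})))"
    show "\<not> E x y"
    proof
      assume e: "E x y"
      have e': "E y x" using sym[OF e] .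
      have "a \<noteq> v" "b \<noteq> v" using ne[OF ab(3)] ne[OF ab(5)] by auto
      hence "x \<noteq> v" "y \<noteq> v" using x y uv by auto
      show False
      proof -
        { assume "x = a" hence False using la[of y] e \<open>y \<noteq> v\<close> by simp }
        moreover { assume "y = a" hence False using la[of x] e' \<open>x \<noteq> v\<close> by simp }
        moreover { assume "x = b" hence False using lb[of y] e \<open>y \<noteq> v\<close> by simp }
        moreover { assume "y = b" hence False using lb[of x] e' \<open>x \<noteq> v\<close> by simp }
        moreover { assume "x = u" "y \<in> M - {v}" hence False using lu[of y] e by simp }
        moreover { assume "y = u" "x \<in> M - {v}" hence False using lu[of x] e' by simp }
        moreover { assume "x = u" "y = u" hence False using e irr by simp }
        moreover { assume "x \<in> M - {v}" "y \<in> M - {v}" hence False using Mind e by auto }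
        ultimately show False using x y by auto
      qed
    qed
  qed
  have finM: "finite M" using MV fin by (rule finite_subset)
  have abu: "a \<noteq> u" "b \<noteq> u"
  proof -
    show "a \<noteq> u" using ab(2) uint unfolding is_leaf_def is_internal_def by auto
    show "b \<noteq> u" using ab(4) uint unfolding is_leaf_def is_internal_def by auto
  qed
  have cM': "card M' = card M + 2"
  proof -
    have "card (M - {v}) = card M - 1" using finM vM by simp
    moreover have "card M \<ge> 1" using finM vM by (metis One_nat_def Suc_leI card_gt_0_iff empty_iff)
    moreover have "card M' = card (M - {v}) + 3"
      using finM aM bM uM ab(1) abu unfolding M'_def by simp
    ultimately show ?thesis by simp
  qed
  have finS: "finite {S. indep_set V E S}"
    by (rule finite_subset[of _ "Pow V"]) (auto simp: indep_set_def fin)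
  have finS2: "finite {S. maximal_indep_set V E S}"
    by (rule finite_subset[of _ "Pow V"]) (auto simp: maximal_indep_set_def indep_set_def fin)
  have "card M' \<le> alpha V E" unfolding alpha_def using finS indM' by auto
  moreover have "indep_domination_number V E \<le> card M"
    unfolding indep_domination_number_def using finS2 M(1) by auto
  ultimately show False using assms(2) cM' unfolding almost_well_covered_def by linarith
qed

end
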